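(* Let $\mathcal{F}$ be an argumentation framework and $S\subseteq A_{\mathcal{F}}$. Suppose that whether or not $S$ is a $\mathit{cf2}$-extension of $\mathcal{F}$ is well-defined. Then $S\in\mathit{cf2}(\mathcal{F})$ if and only if $S\in\mathit{tfcf2}(\mathcal{F})$. Similarly, suppose that whether or not $S$ is a $\mathit{stg2}$-extension of $\mathcal{F}$ is well-defined. Then $S\in\mathit{stg2}(\mathcal{F})$ if and only if $S\in\mathit{tfstg2}(\mathcal{F})$.
   Context: An argumentation framework (AF) is a pair $\mathcal{F}=(A_{\mathcal{F}},R_{\mathcal{F}})$ with $R_{\mathcal{F}}\subseteq A_{\mathcal{F}}\times A_{\mathcal{F}}$ (possibly infinite); write $a\rightarrow b$ for $(a,b)\in R_{\mathcal{F}}$. For $S\subseteq A_{\mathcal{F}}$, $\mathcal{F}|_S=(A_{\mathcal{F}}\cap S,R_{\mathcal{F}}\cap(S\times S))$. $S$ is conflict-free if there are no $a,b\in S$ with $a\rightarrow b$; $cf(\mathcal{F})$ is the set of conflict-free sets. $S^+=\{x:\exists y\in S,\ y\rightarrow x\}$ and $S^\oplus=S\cup S^+$. $S$ is a naive extension if it is a $\subseteq$-maximal conflict-free set; $S$ is a stage extension if it is conflict-free and there is no conflict-free $T$ with $S^\oplus\subsetneq T^\oplus$. For $a\in A_{\mathcal{F}}$, $\mathrm{SCC}(a)$ (the strongly connected component of $a$) is the set of $b$ such that there are directed attack paths (possibly of length $0$) from $a$ to $b$ and from $b$ to $a$; $\mathrm{SCC}(\mathcal{F})$ is the set of these components. For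 $X,S\subseteq A_{\mathcal{F}}$, $D_S(X)=\{b\in X:\exists a\in S\setminus X,\ a\rightarrow b\}$. $\mathit{cf2}$: $S\in\mathit{cf2}(\mathcal{F})$ iff either $|\mathrm{SCC}(\mathcal{F})|=1$ and $S$ is naive in $\mathcal{F}$, or $|\mathrm{SCC}(\mathcal{F})|\neq 1$ and for each $X\in\mathrm{SCC}(\mathcal{F})$, $S\cap X\in\mathit{cf2}(\mathcal{F}|_{X\setminus D_S(X)})$ (the same definition applied recursively to the subframework, with attacks and components computed there). Unfolding this recursion gives a tree of recursive calls rooted at $(\mathcal{F},S)$; nodes whose framework has exactly one SCC (or is empty) are leaves. Whether $S$ is a $\mathit{cf2}$-extension is well-defined if this tree has no infinite branch; then $S\in\mathit{cf2}(\mathcal{F})$ iff at every leaf with exactly one SCC, the relevant part of $S$ is naive in that leaf's framework. $\mathit{stg2}$ is defined identically with "stage" in place of "naive". $\mathit{tfcf2}$, $\mathit{tfstg2}$: for $S\subseteq A_{\mathcal{F}}$, $a\in A_{\mathcal{F}}$ and ordinals $\alpha$ define $C^0_S(a)=\mathrm{SCC}(a)$; $C^{\alpha+1}_S(a)$ = the strongly connected component of $a$ in $\mathcal{F}|_{C^\alpha_S(a)\setminus D_S(C^\alpha_S(a))}$ (empty if $a$ is not in that set); for limit $\lambda$, $C^\lambda_S(a)$ = the strongly connected component of $a$ in $\mathcal{F}|_{\bigcap_{\alpha<\lambda}C^\alpha_S(a)}$. Let $\alpha_S(a)$ be the least $\alpha$ with $a\notin C^\alpha_S(a)$ or $C^{\alpha+1}_S(a)=C^\alpha_S(a)$.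 Then $S\in\mathit{tfcf2}(\mathcal{F})$ iff $S\in cf(\mathcal{F})$ and for each $a\in A_{\mathcal{F}}$, either $a\notin C^{\alpha_S(a)}_S(a)$ or $S\cap C^{\alpha_S(a)}_S(a)$ is a naive extension of $\mathcal{F}|_{C^{\alpha_S(a)}_S(a)}$; $\mathit{tfstg2}$ is the same with "stage extension" in place of "naive extension". *)

theory Defs
  imports Main
begin

text \<open>An argumentation framework: a set of arguments together with an attack relation.
  Well-formedness (attacks only between arguments) is assumed in the theorem.\<close>
type_synonym 'a AF = "'a set \<times> ('a \<times> 'a) set"

definition args :: "'a AF \<Rightarrow> 'a set" where "args F = fst F"
definition att :: "'a AF \<Rightarrow> ('a \<times> 'a) set" where "att F = snd F"

definition restrict_AF :: "'a AF \<Rightarrow> 'a set \<Rightarrow> 'a AF" where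
  "restrict_AF F S = (args F \<inter> S, att F \<inter> (S \<times> S))"

definition cf :: "'a AF \<Rightarrow> 'a set set" where
  "cf F = {S. S \<subseteq> args F \<and> \<not> (\<exists>a\<in>S. \<exists>b\<in>S. (a, b) \<in> att F)}"

definition plus_set :: "'a AF \<Rightarrow> 'a set \<Rightarrow> 'a set" where
  "plus_set F S = {x. \<exists>y\<in>S. (y, x) \<in> att F}"

definition range_set :: "'a AF \<Rightarrow> 'a set \<Rightarrow> 'a set" where
  "range_set F S = S \<union> plus_set F S"

definition naive :: "'a AF \<Rightarrow> 'a set \<Rightarrow> bool" where
  "naive F S \<longleftrightarrow> S \<in> cf F \<and> (\<forall>T\<in>cf F. S \<subseteq> T \<longrightarrow> T = S)"

definition stage :: "'a AF \<Rightarrow> 'a set \<Rightarrow> bool" where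
  "stage F S \<longleftrightarrow> S \<in> cf F \<and> \<not> (\<exists>T\<in>cf F. range_set F S \<subset> range_set F T)"

definition scc_of :: "'a AF \<Rightarrow> 'a \<Rightarrow> 'a set" where
  "scc_of F a = {b \<in> args F. (a, b) \<in> (att F)\<^sup>* \<and> (b, a) \<in> (att F)\<^sup>*}"

definition sccs :: "'a AF \<Rightarrow> 'a set set" where
  "sccs F = scc_of F ` args F"

definition Dset :: "'a AF \<Rightarrow> 'a set \<Rightarrow> 'a set \<Rightarrow> 'a set" where
  "Dset F S X = {b \<in> X. \<exists>a \<in> S - X. (a, b) \<in> att F}"

definition rec_child :: "('a AF \<times> 'a set) \<Rightarrow> ('a AF \<times> 'a set) \<Rightarrow> bool" where
  "rec_child N M \<longleftrightarrow> (let F = fst N; S = snd N in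
     \<not> (\<exists>X. sccs F = {X}) \<and>
     (\<exists>X \<in> sccs F. M = (restrict_AF F (X - Dset F S X), S \<inter> X)))"

definition rec_well_defined :: "'a AF \<Rightarrow> 'a set \<Rightarrow> bool" where
  "rec_well_defined F S \<longleftrightarrow>
     \<not> (\<exists>f. f 0 = (F, S) \<and> (\<forall>n. rec_child (f n) (f (Suc n))))"

text \<open>SCC-recursive scheme with base semantics \<open>P\<close> (naive or stage).  The least
  fixed point; on well-founded recursion trees this is the recursive definition.\<close>
inductive scc_rec :: "('a AF \<Rightarrow> 'a set \<Rightarrow> bool) \<Rightarrow> 'a AF \<Rightarrow> 'a set \<Rightarrow> bool"
  for P :: "'a AF \<Rightarrow> 'a set \<Rightarrow> bool" where
  base: "sccs F = {X} \<Longrightarrow> P F S \<Longrightarrow> scc_rec P F S"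
| step: "\<not> (\<exists>X. sccs F = {X}) \<Longrightarrow> S \<subseteq> args F \<Longrightarrow>
         (\<forall>X \<in> sccs F. scc_rec P (restrict_AF F (X - Dset F S X)) (S \<inter> X)) \<Longrightarrow>
         scc_rec P F S"

definition cf2 :: "'a AF \<Rightarrow> 'a set set" where
  "cf2 F = {S. scc_rec naive F S}"

definition stg2 :: "'a AF \<Rightarrow> 'a set set" where
  "stg2 F = {S. scc_rec stage F S}"

definition tf_succ :: "'a AF \<Rightarrow> 'a set \<Rightarrow> 'a \<Rightarrow> 'a set \<Rightarrow> 'a set" where
  "tf_succ F S a C = scc_of (restrict_AF F (C - Dset F S C)) a"

text \<open>The class \<open>{C^\<alpha>_S(a) | \<alpha> ordinal}\<close> of all stages of the transfinite sequence,
  generated from \<open>C^0\<close> by the successor step and by the limit step (SCC of \<open>a\<close> in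
  the intersection of previously generated stages).\<close>
inductive tf_stage :: "'a AF \<Rightarrow> 'a set \<Rightarrow> 'a \<Rightarrow> 'a set \<Rightarrow> bool"
  for F :: "'a AF" and S :: "'a set" and a :: 'a where
  zero: "tf_stage F S a (scc_of F a)"
| succ: "tf_stage F S a C \<Longrightarrow> tf_stage F S a (tf_succ F S a C)"
| lim: "\<CC> \<noteq> {} \<Longrightarrow> (\<forall>C \<in> \<CC>. tf_stage F S a C) \<Longrightarrow>
        tf_stage F S a (scc_of (restrict_AF F (\<Inter>\<CC>)) a)"

definition tf_final :: "'a AF \<Rightarrow> 'a set \<Rightarrow> 'a \<Rightarrow> 'a set" where
  "tf_final F S a = (THE C. tf_stage F S a C \<and> (a \<notin> C \<or> tf_succ F S a C = C))"

definition tf_ext :: "('a AF \<Rightarrow> 'a set \<Rightarrow> bool) \<Rightarrow> 'a AF \<Rightarrow> 'a set \<Rightarrow> bool" where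
  "tf_ext P F S \<longleftrightarrow> S \<in> cf F \<and>
     (\<forall>a \<in> args F. a \<notin> tf_final F S a \<or>
        P (restrict_AF F (tf_final F S a)) (S \<inter> tf_final F S a))"

definition tfcf2 :: "'a AF \<Rightarrow> 'a set set" where
  "tfcf2 F = {S. tf_ext naive F S}"

definition tfstg2 :: "'a AF \<Rightarrow> 'a set set" where
  "tfstg2 F = {S. tf_ext stage F S}"

end

theory Submission
  imports Defs
begin


definition wf_AF :: "'a AF \<Rightarrow> bool" where
  "wf_AF G \<longleftrightarrow> att G \<subseteq> args G \<times> args G"

definition fc :: "'a AF \<Rightarrow> 'a set \<Rightarrow> 'a \<Rightarrow> 'a set \<Rightarrow> bool" where
  "fc G T a C \<longleftrightarrow> a \<notin> C \<or> tf_succ G T a C = C"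

lemma args_restrict[simp]: "args (restrict_AF G Z) = args G \<inter> Z"
  by (simp add: restrict_AF_def args_def)
lemma att_restrict[simp]: "att (restrict_AF G Z) = att G \<inter> Z \<times> Z"
  by (simp add: restrict_AF_def att_def)
lemma restrict_restrict[simp]: "restrict_AF (restrict_AF G Z) W = restrict_AF G (Z \<inter> W)"
  by (auto simp: restrict_AF_def args_def att_def)
lemma restrict_args: "wf_AF G \<Longrightarrow> restrict_AF G (args G) = G"
  by (cases G) (auto simp: restrict_AF_def args_def att_def wf_AF_def)
lemma wf_restrict: "wf_AF G \<Longrightarrow> wf_AF (restrict_AF G Z)"
  by (auto simp: wf_AF_def)

lemma scc_sub: "scc_of G a \<subseteq> args G"
  by (auto simp: scc_of_def)
lemma scc_self: "a \<in> args G \<Longrightarrow> a \<in> scc_of G a"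
  by (auto simp: scc_of_def)
lemma scc_notin: "wf_AF G \<Longrightarrow> a \<notin> args G \<Longrightarrow> scc_of G a = {}"
proof (rule ccontr)
  assume w: "wf_AF G" and a: "a \<notin> args G" and "scc_of G a \<noteq> {}"
  then obtain b where b: "b \<in> args G" "(b, a) \<in> (att G)\<^sup>*" by (auto simp: scc_of_def)
  from b(2) show False
  proof (cases rule: rtranclE)
    case base then show ?thesis using a b by simp
  next
    case (step y) then show ?thesis using w a by (auto simp: wf_AF_def)
  qed
qed
lemma scc_eq: "a \<in> scc_of G x \<Longrightarrow> scc_of G a = scc_of G x"
  unfolding scc_of_def by (auto intro: rtrancl_trans)
lemma scc_restrict_mono: "Z \<subseteq> W \<Longrightarrow> scc_of (restrict_AF G Z) a \<subseteq> scc_of (restrict_AF G W) a"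
proof -
  assume "Z \<subseteq> W"
  then have "att G \<inter> Z \<times> Z \<subseteq> att G \<inter> W \<times> W" by auto
  then have "(att G \<inter> Z \<times> Z)\<^sup>* \<subseteq> (att G \<inter> W \<times> W)\<^sup>*" by (rule rtrancl_mono)
  then show ?thesis using \<open>Z \<subseteq> W\<close> unfolding scc_of_def by auto
qed

lemma scc_path:
  assumes w: "wf_AF G" and ac: "(a, c) \<in> (att G)\<^sup>*" and a: "a \<in> args G"
  shows "(c, a) \<in> (att G)\<^sup>* \<Longrightarrow> (a, c) \<in> (att G \<inter> scc_of G a \<times> scc_of G a)\<^sup>*"
  using ac
proof (induction rule: rtrancl_induct)
  case base then show ?case by simp
next
  case (step c d)
  have ca: "(c, a) \<in> (att G)\<^sup>*" using step by (meson converse_rtrancl_into_rtrancl)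
  have IH: "(a, c) \<in> (att G \<inter> scc_of G a \<times> scc_of G a)\<^sup>*" using step.IH ca .
  have "c \<in> args G" "d \<in> args G" using step.hyps(2) w by (auto simp: wf_AF_def)
  then have "c \<in> scc_of G a" "d \<in> scc_of G a" using step ca
    by (auto simp: scc_of_def intro: rtrancl_into_rtrancl)
  then have "(c, d) \<in> att G \<inter> scc_of G a \<times> scc_of G a" using step.hyps(2) by simp
  with IH show ?case by (rule rtrancl_into_rtrancl)
qed

lemma scc_restrict_self:
  assumes w: "wf_AF G"
  shows "scc_of (restrict_AF G (scc_of G a)) a = scc_of G a"
proof
  show "scc_of (restrict_AF G (scc_of G a)) a \<subseteq> scc_of G a"
    using scc_sub[of "restrict_AF G (scc_of G a)" a] by auto
next
  show "scc_of G a \<subseteq> scc_of (restrict_AF G (scc_of G a)) a"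
  proof
    fix b assume b: "b \<in> scc_of G a"
    then have a: "a \<in> args G" 
      using w scc_notin by fastforce
    have b2: "b \<in> args G" "(a, b) \<in> (att G)\<^sup>*" "(b, a) \<in> (att G)\<^sup>*" using b by (auto simp: scc_of_def)
    have 1: "(a, b) \<in> (att G \<inter> scc_of G a \<times> scc_of G a)\<^sup>*" using scc_path[OF w b2(2) a b2(3)] .
    have e: "scc_of G b = scc_of G a" using scc_eq[OF b] .
    have 2: "(b, a) \<in> (att G \<inter> scc_of G a \<times> scc_of G a)\<^sup>*" using scc_path[OF w b2(3) b2(1) b2(2)] e by simp
    show "b \<in> scc_of (restrict_AF G (scc_of G a)) a" using 1 2 b b2 by (simp add: scc_of_def)
  qed
qed

lemma single_scc:
  assumes "sccs G = {X}"
  shows "args G = X" "\<And>a. a \<in> args G \<Longrightarrow> scc_of G a = X"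
proof -
  have h: "scc_of G ` args G = {X}" using assms by (simp add: sccs_def)
  then show all: "\<And>a. a \<in> args G \<Longrightarrow> scc_of G a = X" by auto
  from h obtain a0 where "a0 \<in> args G" by auto
  then have "X \<subseteq> args G" using all scc_sub by metis
  moreover have "args G \<subseteq> X"
  proof
    fix b assume "b \<in> args G" then show "b \<in> X" using all[of b] scc_self[of b G] by simp
  qed
  ultimately show "args G = X" by auto
qed

lemma Dset_sub: "Dset G T X \<subseteq> X" by (auto simp: Dset_def)
lemma Dset_args_empty: "wf_AF G \<Longrightarrow> Dset G T (args G) = {}"
  by (auto simp: Dset_def wf_AF_def)
lemma cf_Dset: "T \<in> cf G \<Longrightarrow> T \<inter> Dset G T X = {}"
  by (auto simp: Dset_def cf_def)

lemma Dset_child: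
  assumes cf: "T \<in> cf G" and C: "C \<subseteq> X - Dset G T X"
  shows "Dset (restrict_AF G (X - Dset G T X)) (T \<inter> X) C = Dset G T C"
proof
  show "Dset (restrict_AF G (X - Dset G T X)) (T \<inter> X) C \<subseteq> Dset G T C"
    by (auto simp: Dset_def)
next
  show "Dset G T C \<subseteq> Dset (restrict_AF G (X - Dset G T X)) (T \<inter> X) C"
  proof
    fix b assume "b \<in> Dset G T C"
    then obtain c where b: "b \<in> C" and c: "c \<in> T" "c \<notin> C" "(c, b) \<in> att G" by (auto simp: Dset_def)
    have bX: "b \<in> X" "b \<notin> Dset G T X" using b C by auto
    have cX: "c \<in> X" using bX c by (auto simp: Dset_def)
    have cD: "c \<notin> Dset G T X" using cf_Dset[OF cf] c by auto
    show "b \<in> Dset (restrict_AF G (X - Dset G T X)) (T \<inter> X) C"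
      using b c bX cX cD by (auto simp: Dset_def)
  qed
qed

lemma succ_child:
  assumes cf: "T \<in> cf G" and C: "C \<subseteq> X - Dset G T X"
  shows "tf_succ (restrict_AF G (X - Dset G T X)) (T \<inter> X) a C = tf_succ G T a C"
proof -
  have "(X - Dset G T X) \<inter> (C - Dset G T C) = C - Dset G T C" using C by auto
  then show ?thesis unfolding tf_succ_def using Dset_child[OF cf C] by simp
qed



lemma stage_sub: "tf_stage G T a C \<Longrightarrow> C \<subseteq> args G"
proof (induction rule: tf_stage.induct)
  case zero then show ?case by (rule scc_sub)
next
  case (succ C) then show ?case unfolding tf_succ_def using scc_sub by fastforce
next
  case (lim CC) then show ?case using scc_sub by fastforce
qed

lemma leaf_stage:
  assumes w: "wf_AF G" and s: "sccs G = {X}" and a: "a \<in> args G"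
  shows "tf_stage G T a C \<longleftrightarrow> C = args G"
proof
  have sa: "scc_of G a = args G" using single_scc[OF s] a by simp
  have succ: "tf_succ G T a (args G) = args G"
    unfolding tf_succ_def using Dset_args_empty[OF w] restrict_args[OF w] sa by simp
  assume "tf_stage G T a C"
  then show "C = args G"
  proof (induction rule: tf_stage.induct)
    case zero then show ?case using sa .
  next
    case (succ C) then show ?case using \<open>tf_succ G T a (args G) = args G\<close> by simp
  next
    case (lim CC)
    then have "\<Inter>CC = args G" by auto
    then show ?case using restrict_args[OF w] sa by simp
  qed
next
  assume "C = args G"
  then show "tf_stage G T a C" using single_scc[OF s] a tf_stage.zero[of G T a] by simp
qed

lemma leaf_final:
  assumes w: "wf_AF G" and s: "sccs G = {X}" and a: "a \<in> args G"
  shows "tf_final G T a = args G" "\<exists>!C. tf_stage G T a C \<and> fc G T a C"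
proof -
  have sa: "scc_of G a = args G" using single_scc[OF s] a by simp
  have succ: "tf_succ G T a (args G) = args G"
    unfolding tf_succ_def using Dset_args_empty[OF w] restrict_args[OF w] sa by simp
  show "tf_final G T a = args G" unfolding tf_final_def
    by (rule the_equality) (use leaf_stage[OF w s a] succ in auto)
  show "\<exists>!C. tf_stage G T a C \<and> fc G T a C" unfolding fc_def
    using leaf_stage[OF w s a] succ by auto
qed

lemma D_stage:
  assumes w: "wf_AF G" and X: "X = scc_of G a" and aD: "a \<in> Dset G T X"
  shows "tf_stage G T a C \<longleftrightarrow> C = X \<or> C = {}"
proof
  have aX: "a \<in> X" using aD Dset_sub by fast
  have sX: "tf_succ G T a X = {}" unfolding tf_succ_def
    by (rule scc_notin) (use w aD in \<open>auto intro: wf_restrict\<close>)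
  have s0: "tf_succ G T a {} = {}" unfolding tf_succ_def
    by (rule scc_notin) (use w in \<open>auto intro: wf_restrict\<close>)
  {
    assume "tf_stage G T a C"
    then show "C = X \<or> C = {}"
    proof (induction rule: tf_stage.induct)
      case zero then show ?case using X by simp
    next
      case (succ C) then show ?case using sX s0 by auto
    next
      case (lim CC)
      show ?case
      proof (cases "{} \<in> CC")
        case True
        then have "\<Inter>CC = {}" by auto
        then show ?thesis using scc_notin[OF wf_restrict[OF w]] by auto
      next
        case False
        then have "CC = {X}" using lim by auto
        then show ?thesis using scc_restrict_self[OF w, of a] X by simp
      qed
    qed
  }
  assume "C = X \<or> C = {}"
  then show "tf_stage G T a C"
  proof
    assume "C = X" then show ?thesis using X tf_stage.zero by simp
  next
    assume "C = {}" then show ?thesis using sX tf_stage.succ[OF tf_stage.zero, of G T a] X by simp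
  qed
qed

lemma D_final:
  assumes w: "wf_AF G" and X: "X = scc_of G a" and aD: "a \<in> Dset G T X"
  shows "tf_final G T a = {}" "\<exists>!C. tf_stage G T a C \<and> fc G T a C"
proof -
  have aX: "a \<in> X" using aD Dset_sub by fast
  have sX: "tf_succ G T a X = {}" unfolding tf_succ_def
    by (rule scc_notin) (use w aD in \<open>auto intro: wf_restrict\<close>)
  have e: "\<And>C. (tf_stage G T a C \<and> fc G T a C) \<longleftrightarrow> C = {}"
    unfolding fc_def using D_stage[OF w X aD] sX aX by auto
  show "tf_final G T a = {}" unfolding tf_final_def
    by (rule the_equality) (use e[unfolded fc_def] in auto)
  show "\<exists>!C. tf_stage G T a C \<and> fc G T a C" using e by auto
qed



lemma mid_stage:
  assumes w: "wf_AF G" and cf: "T \<in> cf G" and X: "X = scc_of G a" and a: "a \<in> args G"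
    and aD: "a \<notin> Dset G T X"
  shows "tf_stage G T a C \<longleftrightarrow> (C = X \<or> tf_stage (restrict_AF G (X - Dset G T X)) (T \<inter> X) a C)"
proof -
  define D where "D = Dset G T X"
  define GX where "GX = restrict_AF G (X - D)"
  have Xa: "X \<subseteq> args G" using X scc_sub by simp
  have aX: "a \<in> X" using X scc_self[OF a] by simp
  have argsGX: "args GX = X - D" using Xa by (auto simp: GX_def)
  have subX: "\<And>C. tf_stage GX (T \<inter> X) a C \<Longrightarrow> C \<subseteq> X - D" using stage_sub argsGX by metis
  have z: "scc_of GX a = tf_succ G T a X" by (simp add: tf_succ_def GX_def D_def)
  have sc: "\<And>C. C \<subseteq> X - D \<Longrightarrow> tf_succ GX (T \<inter> X) a C = tf_succ G T a C"
    unfolding GX_def D_def by (rule succ_child[OF cf])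
  have rr: "\<And>Z. Z \<subseteq> X - D \<Longrightarrow> restrict_AF GX Z = restrict_AF G Z"
    by (simp add: GX_def Int_absorb1)
  have "tf_stage G T a C \<longleftrightarrow> (C = X \<or> tf_stage GX (T \<inter> X) a C)"
  proof
    assume "tf_stage G T a C"
    then show "C = X \<or> tf_stage GX (T \<inter> X) a C"
    proof (induction rule: tf_stage.induct)
      case zero then show ?case using X by simp
    next
      case (succ C)
      from succ.IH show ?case
      proof
        assume "C = X"
        then show ?thesis using tf_stage.zero[of GX "T \<inter> X" a] z by simp
      next
        assume st: "tf_stage GX (T \<inter> X) a C"
        then show ?thesis using sc[OF subX[OF st]] tf_stage.succ[OF st] by simp
      qed
    next
      case (lim CC)
      show ?case
      proof (cases "CC \<subseteq> {X}")
        case True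
        then have "CC = {X}" using lim by auto
        then show ?thesis using scc_restrict_self[OF w, of a] X by simp
      next
        case False
        define CC' where "CC' = CC - {X}"
        have ne: "CC' \<noteq> {}" using False by (auto simp: CC'_def)
        have st: "\<forall>C\<in>CC'. tf_stage GX (T \<inter> X) a C" using lim by (auto simp: CC'_def)
        have sub: "\<Inter>CC' \<subseteq> X - D" using st subX ne by blast
        have eq: "\<Inter>CC = \<Inter>CC'" using sub unfolding CC'_def by auto
        have "tf_stage GX (T \<inter> X) a (scc_of (restrict_AF GX (\<Inter>CC')) a)"
          using tf_stage.lim[OF ne st] .
        then show ?thesis using eq rr[OF sub] by simp
      qed
    qed
  next
    assume "C = X \<or> tf_stage GX (T \<inter> X) a C"
    then show "tf_stage G T a C"
    proof
      assume "C = X" then show ?thesis using X tf_stage.zero by simp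
    next
      assume "tf_stage GX (T \<inter> X) a C"
      then show ?thesis
      proof (induction rule: tf_stage.induct)
        case zero
        then show ?case using z tf_stage.succ[OF tf_stage.zero, of G T a] X by simp
      next
        case (succ C)
        then show ?case using sc[OF subX[OF succ.hyps]] tf_stage.succ by metis
      next
        case (lim CC)
        have sub: "\<Inter>CC \<subseteq> X - D" using lim subX by blast
        have "\<forall>C\<in>CC. tf_stage G T a C" using lim by blast
        then have "tf_stage G T a (scc_of (restrict_AF G (\<Inter>CC)) a)"
          using tf_stage.lim[OF lim(1)] by blast
        then show ?case using rr[OF sub] by simp
      qed
    qed
  qed
  then show ?thesis by (simp add: GX_def D_def)
qed

lemma mid_final:
  assumes w: "wf_AF G" and cf: "T \<in> cf G" and X: "X = scc_of G a" and a: "a \<in> args G"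
    and aD: "a \<notin> Dset G T X"
  shows "(tf_stage G T a C \<and> fc G T a C) \<longleftrightarrow>
     (tf_stage (restrict_AF G (X - Dset G T X)) (T \<inter> X) a C \<and> fc (restrict_AF G (X - Dset G T X)) (T \<inter> X) a C)"
proof -
  define D where "D = Dset G T X"
  define GX where "GX = restrict_AF G (X - D)"
  have Xa: "X \<subseteq> args G" using X scc_sub by simp
  have aX: "a \<in> X" using X scc_self[OF a] by simp
  have argsGX: "args GX = X - D" using Xa by (auto simp: GX_def)
  have subX: "\<And>C. tf_stage GX (T \<inter> X) a C \<Longrightarrow> C \<subseteq> X - D" using stage_sub argsGX by metis
  have z: "scc_of GX a = tf_succ G T a X" by (simp add: tf_succ_def GX_def D_def)
  have sc: "\<And>C. C \<subseteq> X - D \<Longrightarrow> tf_succ GX (T \<inter> X) a C = tf_succ G T a C"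
    unfolding GX_def D_def by (rule succ_child[OF cf])
  have ms: "\<And>C. tf_stage G T a C \<longleftrightarrow> (C = X \<or> tf_stage GX (T \<inter> X) a C)"
    using mid_stage[OF w cf X a aD] by (simp add: GX_def D_def)
  have "(tf_stage G T a C \<and> fc G T a C) \<longleftrightarrow> (tf_stage GX (T \<inter> X) a C \<and> fc GX (T \<inter> X) a C)"
  proof
    assume h: "tf_stage G T a C \<and> fc G T a C"
    show "tf_stage GX (T \<inter> X) a C \<and> fc GX (T \<inter> X) a C"
    proof (cases "tf_stage GX (T \<inter> X) a C")
      case True
      then show ?thesis using h sc[OF subX[OF True]] by (simp add: fc_def)
    next
      case False
      then have CX: "C = X" using h ms by blast
      then have sX: "tf_succ G T a X = X" using h aX by (simp add: fc_def)
      then have stX: "tf_stage GX (T \<inter> X) a X" using tf_stage.zero[of GX "T \<inter> X" a] z by simp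
      then show ?thesis using CX sc[OF subX[OF stX]] sX by (simp add: fc_def)
    qed
  next
    assume h: "tf_stage GX (T \<inter> X) a C \<and> fc GX (T \<inter> X) a C"
    then have st: "tf_stage GX (T \<inter> X) a C" by simp
    show "tf_stage G T a C \<and> fc G T a C" using h ms sc[OF subX[OF st]] by (simp add: fc_def)
  qed
  then show ?thesis by (simp add: GX_def D_def)
qed



definition ex_final :: "'a AF \<Rightarrow> 'a set \<Rightarrow> bool" where
  "ex_final G T \<longleftrightarrow> (\<forall>a\<in>args G. \<exists>!C. tf_stage G T a C \<and> fc G T a C)"

definition condf :: "('a AF \<Rightarrow> 'a set \<Rightarrow> bool) \<Rightarrow> 'a AF \<Rightarrow> 'a set \<Rightarrow> 'a \<Rightarrow> bool" where
  "condf P G T a \<longleftrightarrow> a \<notin> tf_final G T a \<or> P (restrict_AF G (tf_final G T a)) (T \<inter> tf_final G T a)"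

lemma tf_ext_condf: "tf_ext P G T \<longleftrightarrow> T \<in> cf G \<and> (\<forall>a\<in>args G. condf P G T a)"
  by (simp add: tf_ext_def condf_def)

lemma final_eq_THE: "tf_final G T a = (THE C. tf_stage G T a C \<and> fc G T a C)"
  by (simp add: tf_final_def fc_def)

lemma cf_child:
  assumes "T \<in> cf G" and "X \<subseteq> args G"
  shows "T \<inter> X \<in> cf (restrict_AF G (X - Dset G T X))"
  using assms cf_Dset[OF assms(1), of X] by (auto simp: cf_def)

lemma cf_from_children:
  assumes T: "T \<subseteq> args G" and ch: "\<forall>X\<in>sccs G. T \<inter> X \<in> cf (restrict_AF G (X - Dset G T X))"
  shows "T \<in> cf G"
proof -
  have "\<not> (a, b) \<in> att G" if a: "a \<in> T" and b: "b \<in> T" for a b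
  proof
    assume ab: "(a, b) \<in> att G"
    define X where "X = scc_of G b"
    have bA: "b \<in> args G" using b T by auto
    have Xs: "X \<in> sccs G" using bA by (simp add: X_def sccs_def)
    have bX: "b \<in> X" using scc_self[OF bA] by (simp add: X_def)
    have c: "T \<inter> X \<in> cf (restrict_AF G (X - Dset G T X))" using ch Xs by blast
    then have bD: "b \<notin> Dset G T X" using b bX by (auto simp: cf_def)
    show False
    proof (cases "a \<in> X")
      case True
      then have "a \<notin> Dset G T X" using c a by (auto simp: cf_def)
      then show False using c a b True bX bD ab by (auto simp: cf_def)
    next
      case False
      then show False using bD a ab bX by (auto simp: Dset_def)
    qed
  qed
  then show ?thesis using T by (auto simp: cf_def)
qed

lemma multi_tf:
  assumes w: "wf_AF G"
    and ch: "\<forall>X\<in>sccs G. T \<inter> X \<in> cf (restrict_AF G (X - Dset G T X)) \<longrightarrow>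
                ex_final (restrict_AF G (X - Dset G T X)) (T \<inter> X)"
  shows "tf_ext P G T \<longleftrightarrow> (T \<subseteq> args G \<and> (\<forall>X\<in>sccs G. tf_ext P (restrict_AF G (X - Dset G T X)) (T \<inter> X)))"
    and "T \<in> cf G \<Longrightarrow> ex_final G T"
proof -
  have key: "(condf P G T a \<longleftrightarrow> condf P (restrict_AF G (X - Dset G T X)) (T \<inter> X) a)
      \<and> (\<exists>!C. tf_stage G T a C \<and> fc G T a C)"
    if cf: "T \<in> cf G" and a: "a \<in> args G" and X: "X = scc_of G a" and aD: "a \<notin> Dset G T X" for a X
  proof -
    define GX where "GX = restrict_AF G (X - Dset G T X)"
    have Xa: "X \<subseteq> args G" using X scc_sub by simp
    have aX: "a \<in> X" using X scc_self[OF a] by simp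
    have argsGX: "args GX = X - Dset G T X" using Xa by (auto simp: GX_def)
    have Xs: "X \<in> sccs G" using a X by (simp add: sccs_def)
    have exf: "ex_final GX (T \<inter> X)" using ch Xs cf_child[OF cf Xa] by (simp add: GX_def)
    have aGX: "a \<in> args GX" using argsGX aX aD by simp
    have ex1: "\<exists>!C. tf_stage GX (T \<inter> X) a C \<and> fc GX (T \<inter> X) a C" using exf aGX by (simp add: ex_final_def)
    have mf: "\<And>C. (tf_stage G T a C \<and> fc G T a C) \<longleftrightarrow> (tf_stage GX (T \<inter> X) a C \<and> fc GX (T \<inter> X) a C)"
      using mid_final[OF w cf X a aD] by (simp add: GX_def)
    have fe: "tf_final G T a = tf_final GX (T \<inter> X) a"
      unfolding final_eq_THE using mf by simp
    have "tf_stage GX (T \<inter> X) a (tf_final GX (T \<inter> X) a)"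
      unfolding final_eq_THE using theI'[OF ex1] by simp
    then have fs: "tf_final GX (T \<inter> X) a \<subseteq> X - Dset G T X" using stage_sub argsGX by metis
    then have r: "restrict_AF GX (tf_final GX (T \<inter> X) a) = restrict_AF G (tf_final GX (T \<inter> X) a)"
      by (simp add: GX_def Int_absorb1)
    have "T \<inter> X \<inter> tf_final GX (T \<inter> X) a = T \<inter> tf_final GX (T \<inter> X) a" using fs by auto
    then have "condf P G T a \<longleftrightarrow> condf P GX (T \<inter> X) a" unfolding condf_def using fe r by simp
    moreover have "\<exists>!C. tf_stage G T a C \<and> fc G T a C" using ex1 mf by simp
    ultimately show ?thesis by (simp add: GX_def)
  qed
  have keyD: "condf P G T a \<and> (\<exists>!C. tf_stage G T a C \<and> fc G T a C)"
    if a: "a \<in> args G" and X: "X = scc_of G a" and aD: "a \<in> Dset G T X" for a X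
    using D_final[OF w X aD] by (simp add: condf_def)
  show "T \<in> cf G \<Longrightarrow> ex_final G T"
  proof -
    assume cf: "T \<in> cf G"
    show "ex_final G T" unfolding ex_final_def
    proof
      fix a assume a: "a \<in> args G"
      show "\<exists>!C. tf_stage G T a C \<and> fc G T a C"
      proof (cases "a \<in> Dset G T (scc_of G a)")
        case True then show ?thesis using keyD[OF a refl True] by simp
      next
        case False then show ?thesis using key[OF cf a refl False] by simp
      qed
    qed
  qed
  show "tf_ext P G T \<longleftrightarrow> (T \<subseteq> args G \<and> (\<forall>X\<in>sccs G. tf_ext P (restrict_AF G (X - Dset G T X)) (T \<inter> X)))"
  proof
    assume h: "tf_ext P G T"
    then have cf: "T \<in> cf G" and cd: "\<forall>a\<in>args G. condf P G T a" by (auto simp: tf_ext_condf)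
    have "tf_ext P (restrict_AF G (X - Dset G T X)) (T \<inter> X)" if Xs: "X \<in> sccs G" for X
    proof -
      obtain x where x: "x \<in> args G" "X = scc_of G x" using Xs by (auto simp: sccs_def)
      have Xa: "X \<subseteq> args G" using x scc_sub by simp
      have "condf P (restrict_AF G (X - Dset G T X)) (T \<inter> X) a"
        if aa: "a \<in> args (restrict_AF G (X - Dset G T X))" for a
      proof -
        have aX: "a \<in> X" "a \<notin> Dset G T X" "a \<in> args G" using aa by auto
        have Xe: "X = scc_of G a" using scc_eq[of a G x] aX x by simp
        show ?thesis using key[OF cf aX(3) Xe aX(2)] cd aX(3) by simp
      qed
      then show ?thesis using cf_child[OF cf Xa] by (simp add: tf_ext_condf)
    qed
    then show "T \<subseteq> args G \<and> (\<forall>X\<in>sccs G. tf_ext P (restrict_AF G (X - Dset G T X)) (T \<inter> X))"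
      using cf by (auto simp: cf_def)
  next
    assume h: "T \<subseteq> args G \<and> (\<forall>X\<in>sccs G. tf_ext P (restrict_AF G (X - Dset G T X)) (T \<inter> X))"
    then have cf: "T \<in> cf G" using cf_from_children[of T G] by (auto simp: tf_ext_condf)
    have "condf P G T a" if a: "a \<in> args G" for a
    proof (cases "a \<in> Dset G T (scc_of G a)")
      case True then show ?thesis using keyD[OF a refl] by simp
    next
      case False
      have Xs: "scc_of G a \<in> sccs G" using a by (simp add: sccs_def)
      have aa: "a \<in> args (restrict_AF G (scc_of G a - Dset G T (scc_of G a)))"
        using a False scc_self[OF a] by simp
      have "condf P (restrict_AF G (scc_of G a - Dset G T (scc_of G a))) (T \<inter> scc_of G a) a"
        using h Xs aa by (auto simp: tf_ext_condf)
      then show ?thesis using key[OF cf a refl False] by simp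
    qed
    then show "tf_ext P G T" using cf by (simp add: tf_ext_condf)
  qed
qed

lemma leaf_node:
  assumes w: "wf_AF G" and s: "sccs G = {X}" and Pcf: "\<And>G T. P G T \<Longrightarrow> T \<in> cf G"
  shows "(scc_rec P G T \<longleftrightarrow> tf_ext P G T) \<and> ex_final G T"
proof -
  have ex: "ex_final G T" using leaf_final[OF w s] by (simp add: ex_final_def)
  have ne: "args G \<noteq> {}" using s by (auto simp: sccs_def)
  have r1: "scc_rec P G T \<longleftrightarrow> P G T"
  proof
    assume "scc_rec P G T" then show "P G T"
      by (cases rule: scc_rec.cases) (use s in auto)
  next
    assume "P G T" then show "scc_rec P G T" by (rule scc_rec.base[OF s])
  qed
  have r2: "tf_ext P G T \<longleftrightarrow> P G T"
  proof
    assume h: "tf_ext P G T"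
    then have cf: "T \<in> cf G" and cd: "\<forall>a\<in>args G. condf P G T a" by (auto simp: tf_ext_condf)
    obtain a where a: "a \<in> args G" using ne by auto
    have "T \<inter> args G = T" using cf by (auto simp: cf_def)
    have "condf P G T a" using cd a by blast
    then have "a \<notin> args G \<or> P G (T \<inter> args G)"
      unfolding condf_def leaf_final(1)[OF w s a, of T] restrict_args[OF w] .
    then show "P G T" using a \<open>T \<inter> args G = T\<close> by simp
  next
    assume p: "P G T"
    then have cf: "T \<in> cf G" by (rule Pcf)
    have "T \<inter> args G = T" using cf by (auto simp: cf_def)
    then have "\<forall>a\<in>args G. condf P G T a" using p leaf_final(1)[OF w s] restrict_args[OF w] by (simp add: condf_def)
    then show "tf_ext P G T" using cf by (simp add: tf_ext_condf)
  qed
  show ?thesis using r1 r2 ex by simp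
qed

lemma multi_rec:
  assumes ns: "\<not> (\<exists>X. sccs G = {X})"
  shows "scc_rec P G T \<longleftrightarrow> (T \<subseteq> args G \<and> (\<forall>X\<in>sccs G. scc_rec P (restrict_AF G (X - Dset G T X)) (T \<inter> X)))"
proof
  assume "scc_rec P G T" then show "T \<subseteq> args G \<and> (\<forall>X\<in>sccs G. scc_rec P (restrict_AF G (X - Dset G T X)) (T \<inter> X))"
    by (cases rule: scc_rec.cases) (use ns in auto)
next
  assume "T \<subseteq> args G \<and> (\<forall>X\<in>sccs G. scc_rec P (restrict_AF G (X - Dset G T X)) (T \<inter> X))"
  then show "scc_rec P G T" using scc_rec.step[OF ns] by blast
qed

definition good :: "('a AF \<Rightarrow> 'a set \<Rightarrow> bool) \<Rightarrow> 'a AF \<Rightarrow> 'a set \<Rightarrow> bool" where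
  "good P G T \<longleftrightarrow> (scc_rec P G T \<longleftrightarrow> tf_ext P G T) \<and> (T \<in> cf G \<longrightarrow> ex_final G T)"

lemma bad_step:
  assumes Pcf: "\<And>G T. P G T \<Longrightarrow> T \<in> cf G"
    and b: "wf_AF (fst N) \<and> \<not> good P (fst N) (snd N)"
  shows "\<exists>M. rec_child N M \<and> wf_AF (fst M) \<and> \<not> good P (fst M) (snd M)"
proof (rule ccontr)
  assume nc: "\<not> ?thesis"
  obtain G T where N: "N = (G, T)" by (cases N)
  have w: "wf_AF G" using b N by simp
  show False
  proof (cases "\<exists>X. sccs G = {X}")
    case True
    then obtain X where "sccs G = {X}" by auto
    then have "good P G T" using leaf_node[OF w _ Pcf] by (simp add: good_def)
    then show False using b N by simp
  next
    case False
    have cg: "good P (restrict_AF G (X - Dset G T X)) (T \<inter> X)" if Xs: "X \<in> sccs G" for X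
    proof -
      have "rec_child N (restrict_AF G (X - Dset G T X), T \<inter> X)"
        using False Xs N by (auto simp: rec_child_def Let_def)
      then show ?thesis using nc wf_restrict[OF w] by fastforce
    qed
    have ch: "\<forall>X\<in>sccs G. T \<inter> X \<in> cf (restrict_AF G (X - Dset G T X)) \<longrightarrow>
                ex_final (restrict_AF G (X - Dset G T X)) (T \<inter> X)"
      using cg by (simp add: good_def)
    have e1: "scc_rec P G T \<longleftrightarrow> tf_ext P G T"
      unfolding multi_rec[OF False] multi_tf(1)[OF w ch] using cg by (simp add: good_def)
    have "good P G T" using e1 multi_tf(2)[OF w ch] by (simp add: good_def)
    then show False using b N by simp
  qed
qed

lemma chain:
  assumes step: "\<And>N. Q N \<Longrightarrow> \<exists>M. rec_child N M \<and> Q M" and q0: "Q N0"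
  shows "\<exists>f. f 0 = N0 \<and> (\<forall>n. rec_child (f n) (f (Suc n)))"
proof -
  define f where "f = rec_nat N0 (\<lambda>_ N. SOME M. rec_child N M \<and> Q M)"
  have f0: "f 0 = N0" by (simp add: f_def)
  have fS: "\<And>n. f (Suc n) = (SOME M. rec_child (f n) M \<and> Q M)" by (simp add: f_def)
  have Qn: "Q (f n)" for n
  proof (induction n)
    case 0 then show ?case using q0 f0 by simp
  next
    case (Suc n)
    then show ?case using someI_ex[OF step[OF Suc]] fS by simp
  qed
  have "rec_child (f n) (f (Suc n))" for n using someI_ex[OF step[OF Qn]] fS by simp
  then show ?thesis using f0 by blast
qed

lemma good_wd:
  assumes Pcf: "\<And>G T. P G T \<Longrightarrow> T \<in> cf G"
    and wd: "rec_well_defined G T" and w: "wf_AF G"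
  shows "good P G T"
proof (rule ccontr)
  assume "\<not> good P G T"
  define Q where "Q = (\<lambda>N. wf_AF (fst N) \<and> \<not> good P (fst N) (snd N))"
  have q0: "Q (G, T)" using w \<open>\<not> good P G T\<close> by (simp add: Q_def)
  have st: "\<And>N. Q N \<Longrightarrow> \<exists>M. rec_child N M \<and> Q M"
    unfolding Q_def by (rule bad_step[OF Pcf])
  have "\<exists>f. f 0 = (G, T) \<and> (\<forall>n. rec_child (f n) (f (Suc n)))"
    by (rule chain[OF st q0])
  then show False using wd by (simp add: rec_well_defined_def)
qed

theorem theorem1:
  fixes A :: "'a set" and R :: "('a \<times> 'a) set" and S :: "'a set"
  assumes "R \<subseteq> A \<times> A" and "S \<subseteq> A"
  shows "(rec_well_defined (A, R) S \<longrightarrow> (S \<in> cf2 (A, R) \<longleftrightarrow> S \<in> tfcf2 (A, R)))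
       \<and> (rec_well_defined (A, R) S \<longrightarrow> (S \<in> stg2 (A, R) \<longleftrightarrow> S \<in> tfstg2 (A, R)))"
proof -
  have w: "wf_AF (A, R)" using assms(1) by (simp add: wf_AF_def args_def att_def)
  have n: "\<And>G T. naive G T \<Longrightarrow> T \<in> cf G" by (simp add: naive_def)
  have s: "\<And>G T. stage G T \<Longrightarrow> T \<in> cf G" by (simp add: stage_def)
  show ?thesis
    using good_wd[OF n _ w] good_wd[OF s _ w]
    by (simp add: good_def cf2_def tfcf2_def stg2_def tfstg2_def)
qed


end
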